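(* Let $\lambda$ be a partition of $N$ of length $p$. Let $P(\lambda)$ be the proportion of permuted star thorn trees $(\tau,\sigma)$ of type $\lambda$ having both properties (P1) and (P2) among all permuted star thorn trees of type $\lambda$, and let $P'(\lambda)$ be the proportion of those having (P1) and (P2) among the permuted star thorn trees of type $\lambda$ having property (P1). Then $$P'(\lambda)=\frac{N}{p\,(N-p+1)}\qquad\text{and}\qquad P(\lambda)=\frac{1}{N-p+1}.$$
   Context: A star thorn tree of size $N$ with $p$ black vertices consists of a white root vertex with a left-to-right ordered sequence of $N$ descending elements, of which $p$ are edges to $p$ distinct black vertices and $N-p$ are thorns (edges with only one endpoint; these are the "white thorns"), together with $N-p$ further thorns ("black thorns") attached to the black vertices, the thorns at each black vertex being linearly ordered; trees are considered up to isomorphism preserving the orders. The degree of a black vertex is $1$ plus its number of thorns; the type of the tree is the partition of $N$ formed by the black vertices' degrees. A permuted star thorn tree of type $\lambda$ is a pair $(\tau,\sigma)$ where $\tau$ is a star thorn tree of type $\lambda$ and $\sigma$ is a bijection from the set of white thorns of $\tau$ to the set of black thorns of $\tau$. Property (P1): the leftmost descending element at the root is an edge $e_0$ (not a thorn); let $\pi_0$ be its black endpoint. When (P1) holds, define the oriented graph $G(\tau,\sigma)$ whose vertices are the black vertices of $\tau$, with, for each black vertex $\pi\neq\pi_0$, one arc $\pi\to\pi'$ defined as follows: let $e$ be the edge joining $\pi$ to the root, let $e'$ be the element immediately to the left of $e$ at the root, let $e''=e'$ if $e'$ is an edge and $e''=\sigma(e')$ if $e'$ is a thorn, and let $\pi'$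 be the black vertex to which $e''$ is attached. Property (P2): $G(\tau,\sigma)$ is an oriented tree with root $\pi_0$ (all arcs oriented towards $\pi_0$). *)

theory Defs
  imports Complex_Main "HOL-Library.Multiset" "HOL-Library.FuncSet"
begin

text \<open>
A star thorn tree of size N is a pair (w, ds):
  w  :: bool list of length N, the left-to-right sequence of descending elements
        at the white root; w!i = True iff the i-th element is an edge
        (False iff it is a white thorn);
  ds :: nat list, ds!j = degree of the black vertex attached to the j-th edge
        (counted left to right among the edges at the root); that vertex carries
        ds!j - 1 black thorns, linearly ordered and indexed 0 .. ds!j - 2.
Since all orders are fixed, there are no nontrivial isomorphisms, so such pairs
are exactly the isomorphism classes.
\<close>

type_synonym stt = "bool list \<times> nat list"

definition star_thorn_trees :: "nat multiset \<Rightarrow> stt set" where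
  "star_thorn_trees lam =
     {(w, ds). length w = sum_mset lam \<and> length (filter id w) = size lam \<and> mset ds = lam}"

definition white_thorns :: "bool list \<Rightarrow> nat set" where
  "white_thorns w = {i. i < length w \<and> \<not> w ! i}"

definition black_thorns :: "nat list \<Rightarrow> (nat \<times> nat) set" where
  "black_thorns ds = {(j, t). j < length ds \<and> t < ds ! j - 1}"

definition permuted_stt :: "nat multiset \<Rightarrow> (stt \<times> (nat \<Rightarrow> nat \<times> nat)) set" where
  "permuted_stt lam =
     {((w, ds), \<sigma>). (w, ds) \<in> star_thorn_trees lam \<and>
        \<sigma> \<in> extensional (white_thorns w) \<and>
        bij_betw \<sigma> (white_thorns w) (black_thorns ds)}"

definition P1 :: "stt \<times> (nat \<Rightarrow> nat \<times> nat) \<Rightarrow> bool" where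
  "P1 x = (let w = fst (fst x) in w \<noteq> [] \<and> hd w)"

definition edge_pos :: "bool list \<Rightarrow> nat \<Rightarrow> nat" where
  "edge_pos w j = sorted_list_of_set {i. i < length w \<and> w ! i} ! j"

definition vertex_of_edge :: "bool list \<Rightarrow> nat \<Rightarrow> nat" where
  "vertex_of_edge w i = length (filter id (take i w))"

definition arc_target :: "bool list \<Rightarrow> (nat \<Rightarrow> nat \<times> nat) \<Rightarrow> nat \<Rightarrow> nat" where
  "arc_target w \<sigma> j =
     (let i = edge_pos w j - 1 in
      if w ! i then vertex_of_edge w i else fst (\<sigma> i))"

definition arcs_G :: "stt \<times> (nat \<Rightarrow> nat \<times> nat) \<Rightarrow> (nat \<times> nat) set" where
  "arcs_G x = (let w = fst (fst x); \<sigma> = snd x; p = length (snd (fst x)) in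
      {(j, arc_target w \<sigma> j) | j. 0 < j \<and> j < p})"

definition oriented_tree :: "'a set \<Rightarrow> ('a \<times> 'a) set \<Rightarrow> 'a \<Rightarrow> bool" where
  "oriented_tree V A r =
     (r \<in> V \<and> A \<subseteq> V \<times> V \<and> (\<forall>y. (r, y) \<notin> A) \<and>
      (\<forall>v\<in>V - {r}. \<exists>!y. (v, y) \<in> A) \<and>
      (\<forall>v\<in>V. (v, r) \<in> A\<^sup>*))"

text \<open>Property (P2) (meaningful when (P1) holds): G is an oriented tree rooted at
  the black vertex 0, i.e. the endpoint of the leftmost edge.\<close>
definition P2 :: "stt \<times> (nat \<Rightarrow> nat \<times> nat) \<Rightarrow> bool" where
  "P2 x = oriented_tree {0..<length (snd (fst x))} (arcs_G x) 0"

end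

theory Submission
  imports Defs
begin


definition Inj :: "'a set \<Rightarrow> 'b set \<Rightarrow> (('a \<Rightarrow> 'b) \<Rightarrow> bool) \<Rightarrow> ('a \<Rightarrow> 'b) set" where
  "Inj A B P = {f \<in> extensional A. inj_on f A \<and> f ` A \<subseteq> B \<and> P f}"

lemma Inj_finite: "finite A \<Longrightarrow> finite B \<Longrightarrow> finite (Inj A B P)"
proof -
  assume a: "finite A" "finite B"
  have "Inj A B P \<subseteq> PiE A (\<lambda>_. B)" by (auto simp: Inj_def PiE_def Pi_def)
  moreover have "finite (PiE A (\<lambda>_. B))" using a by (intro finite_PiE) auto
  ultimately show ?thesis by (rule finite_subset)
qed

lemma Inj_split:
  assumes "finite A" "finite B" "s \<in> A"
  shows "card (Inj A B P) = (\<Sum>t\<in>B. card (Inj (A - {s}) (B - {t}) (\<lambda>f. P (f(s := t)))))"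
proof -
  have eq: "Inj A B P = (\<Union>t\<in>B. {f \<in> Inj A B P. f s = t})"
    using assms by (auto simp: Inj_def)
  have "card (Inj A B P) = (\<Sum>t\<in>B. card {f \<in> Inj A B P. f s = t})"
    apply (subst eq, rule card_UN_disjoint)
    using assms Inj_finite[of A B P] by auto
  also have "\<dots> = (\<Sum>t\<in>B. card (Inj (A - {s}) (B - {t}) (\<lambda>f. P (f(s := t)))))"
  proof (rule sum.cong[OF refl])
    fix t assume t: "t \<in> B"
    show "card {f \<in> Inj A B P. f s = t} = card (Inj (A - {s}) (B - {t}) (\<lambda>f. P (f(s := t))))"
    proof (rule bij_betw_same_card[of "\<lambda>f. f(s := undefined)"], rule bij_betw_byWitness[of _ "\<lambda>f. f(s := t)"])
      show "\<forall>f\<in>{f \<in> Inj A B P. f s = t}. (f(s := undefined))(s := t) = f" by auto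
      show "\<forall>f\<in>Inj (A - {s}) (B - {t}) (\<lambda>f. P (f(s := t))). (f(s := t))(s := undefined) = f"
        by (auto simp: Inj_def extensional_def fun_eq_iff)
      show "(\<lambda>f. f(s := undefined)) ` {f \<in> Inj A B P. f s = t} \<subseteq> Inj (A - {s}) (B - {t}) (\<lambda>f. P (f(s := t)))"
      proof
        fix g assume "g \<in> (\<lambda>f. f(s := undefined)) ` {f \<in> Inj A B P. f s = t}"
        then obtain f where f: "f \<in> Inj A B P" "f s = t" "g = f(s := undefined)" by auto
        have "g(s := t) = f" using f by auto
        moreover have "\<forall>x\<in>A - {s}. f x \<noteq> t" using f assms(3) by (auto simp: Inj_def inj_on_def)
        ultimately show "g \<in> Inj (A - {s}) (B - {t}) (\<lambda>f. P (f(s := t)))"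
          using f by (auto simp: Inj_def extensional_def inj_on_def)
      qed
      show "(\<lambda>f. f(s := t)) ` Inj (A - {s}) (B - {t}) (\<lambda>f. P (f(s := t))) \<subseteq> {f \<in> Inj A B P. f s = t}"
      proof
        fix g assume "g \<in> (\<lambda>f. f(s := t)) ` Inj (A - {s}) (B - {t}) (\<lambda>f. P (f(s := t)))"
        then obtain f where f: "f \<in> Inj (A - {s}) (B - {t}) (\<lambda>f. P (f(s := t)))" "g = f(s := t)" by auto
        show "g \<in> {f \<in> Inj A B P. f s = t}"
          using f t assms(3) by (auto simp: Inj_def extensional_def inj_on_def)
      qed
    qed
  qed
  finally show ?thesis .
qed

lemma Inj_count:
  assumes "finite A" "finite B" "card A \<le> card B"
  shows "card (Inj A B (\<lambda>_. True)) * fact (card B - card A) = fact (card B)"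
  using assms
proof (induction A arbitrary: B rule: finite_induct)
  case empty
  have "Inj {} B (\<lambda>_. True) = {\<lambda>_. undefined}" by (auto simp: Inj_def)
  then show ?case unfolding \<open>Inj {} B (\<lambda>_. True) = {\<lambda>_. undefined}\<close> by simp
next
  case (insert s A)
  have "card (Inj (insert s A) B (\<lambda>_. True)) = (\<Sum>t\<in>B. card (Inj A (B - {t}) (\<lambda>_. True)))"
    using Inj_split[of "insert s A" B s "\<lambda>_. True"] insert by simp
  then have "card (Inj (insert s A) B (\<lambda>_. True)) * fact (card B - card (insert s A))
     = (\<Sum>t\<in>B. card (Inj A (B - {t}) (\<lambda>_. True)) * fact (card (B - {t}) - card A))"
    using insert by (simp add: sum_distrib_right)
  also have "\<dots> = (\<Sum>t\<in>B. fact (card B - 1))"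
    apply (rule sum.cong[OF refl])
    using insert by (subst insert.IH) auto
  also have "\<dots> = fact (card B)"
    using insert by (cases "card B") auto
  finally show ?case .
qed



definition rel :: "'v set \<Rightarrow> 'v \<Rightarrow> ('v \<Rightarrow> 'v) \<Rightarrow> ('v \<times> 'v) set" where
  "rel V r f = {(v, f v) | v. v \<in> V \<and> v \<noteq> r}"

definition good :: "'v set \<Rightarrow> 'v \<Rightarrow> ('v \<Rightarrow> 'v) \<Rightarrow> bool" where
  "good V r f \<longleftrightarrow> (\<forall>v\<in>V. (v, r) \<in> (rel V r f)\<^sup>*)"

definition arcf :: "'v set \<Rightarrow> ('v \<Rightarrow> 'v) \<Rightarrow> ('v \<Rightarrow> 'w) \<Rightarrow> ('t \<Rightarrow> 'v) \<Rightarrow> ('w \<Rightarrow> 't) \<Rightarrow> 'v \<Rightarrow> 'v" where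
  "arcf F g h own \<sigma> v = (if v \<in> F then own (\<sigma> (h v)) else g v)"

lemma rel_iff: "(x, y) \<in> rel V r f \<longleftrightarrow> x \<in> V \<and> x \<noteq> r \<and> y = f x"
  by (auto simp: rel_def)

lemma sink_unique:
  assumes fn: "\<And>u v w. (u, v) \<in> R \<Longrightarrow> (u, w) \<in> R \<Longrightarrow> v = w"
    and "(x, a) \<in> R\<^sup>*" "\<forall>y. (a, y) \<notin> R"
  shows "(x, b) \<in> R\<^sup>* \<Longrightarrow> \<forall>y. (b, y) \<notin> R \<Longrightarrow> a = b"
  using assms(2)
proof (induction arbitrary: b rule: converse_rtrancl_induct)
  case base
  then show ?case using assms(3) by (auto elim: converse_rtranclE)
next
  case (step x y)
  from step.prems(1) show ?case
  proof (cases rule: converse_rtranclE)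
    case base
    then show ?thesis using step.hyps step.prems(2) by auto
  next
    case (step y')
    then have "y' = y" using fn \<open>(x, y) \<in> R\<close> by auto
    then show ?thesis using step.IH step.prems(2) \<open>(y', b) \<in> R\<^sup>*\<close> by auto
  qed
qed

lemma closed_rtrancl:
  assumes "(x, y) \<in> R\<^sup>*" "x \<in> C" "\<And>u v. (u, v) \<in> R \<Longrightarrow> u \<in> C \<Longrightarrow> v \<in> C"
  shows "y \<in> C"
  using assms(1,2) by induction (auto intro: assms(3))

lemma good_empty: "good V r (arcf {} g h own \<sigma>) \<longleftrightarrow> (\<forall>v\<in>V. (v, r) \<in> (rel (V - {}) r g)\<^sup>*)"
proof -
  have "arcf {} g h own \<sigma> = g" by (auto simp: arcf_def fun_eq_iff)
  then show ?thesis by (simp add: good_def)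
qed

lemma tree_count:
  assumes "card F = n" "finite F" "r \<notin> F" "F \<subseteq> V" "F \<noteq> {}"
    "finite W" "finite T" "inj_on h F" "h ` F \<subseteq> W" "card W \<le> card T" "own ` T \<subseteq> V"
    "\<forall>v\<in>V. \<exists>u\<in>insert r F. (v, u) \<in> (rel (V - F) r g)\<^sup>*"
  shows "card (Inj W T (\<lambda>\<sigma>. good V r (arcf F g h own \<sigma>))) * fact (card T - card W)
        = card {t\<in>T. (own t, r) \<in> (rel (V - F) r g)\<^sup>*} * fact (card T - 1)"
  using assms
proof (induction n arbitrary: F g W T)
  case 0
  then show ?case by auto
next
  case (Suc n)
  note hyp = Suc.prems
  obtain s where sF: "s \<in> F" using hyp(5) by auto
  define F' where "F' = F - {s}"
  define R where "R = rel (V - F) r g"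
  define C where "C = {v. (v, s) \<in> R\<^sup>*}"
  define A0 where "A0 = {t\<in>T. (own t, r) \<in> R\<^sup>*}"
  define AC where "AC = {t\<in>T. (own t, s) \<in> R\<^sup>*}"
  define g' where "g' = (\<lambda>t. g(s := own t))"
  define R' where "R' = (\<lambda>t. rel (V - F') r (g' t))"
  have sV: "s \<in> V" using sF hyp(4) by auto
  have rs: "r \<noteq> s" using sF hyp(3) by auto
  have hsW: "h s \<in> W" using sF hyp(9) by auto
  have Rfun: "\<And>x y z. (x, y) \<in> R \<Longrightarrow> (x, z) \<in> R \<Longrightarrow> y = z" by (auto simp: R_def rel_iff)
  have rsink: "\<And>y. (r, y) \<notin> R" and ssink: "\<And>y. (s, y) \<notin> R" using sF by (auto simp: R_def rel_iff)
  have disj: "\<And>v. (v, r) \<in> R\<^sup>* \<Longrightarrow> (v, s) \<in> R\<^sup>* \<Longrightarrow> False"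
  proof -
    fix v assume "(v, r) \<in> R\<^sup>*" "(v, s) \<in> R\<^sup>*"
    note a = this
    have r1: "\<forall>y. (r, y) \<notin> R" and s1: "\<forall>y. (s, y) \<notin> R" using rsink ssink by auto
    have "r = s" by (rule sink_unique[OF Rfun a(1) r1 a(2) s1])
    then show False using rs by simp
  qed
  have A0AC: "A0 \<inter> AC = {}" using disj by (auto simp: A0_def AC_def)
  have split: "card (Inj W T (\<lambda>\<sigma>. good V r (arcf F g h own \<sigma>))) =
     (\<Sum>t\<in>T. card (Inj (W - {h s}) (T - {t}) (\<lambda>\<sigma>. good V r (arcf F' (g' t) h own \<sigma>))))"
  proof -
    have eq: "\<And>t \<sigma>. arcf F g h own (\<sigma>(h s := t)) = arcf F' (g' t) h own \<sigma>"
      using hyp(8) sF by (auto simp: arcf_def fun_eq_iff F'_def g'_def inj_on_def)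
    show ?thesis using Inj_split[OF hyp(6) hyp(7) hsW, of "\<lambda>\<sigma>. good V r (arcf F g h own \<sigma>)"]
      by (simp add: eq)
  qed
  have bad: "Inj (W - {h s}) (T - {t}) (\<lambda>\<sigma>. good V r (arcf F' (g' t) h own \<sigma>)) = {}"
    if t: "t \<in> AC" for t
  proof -
    have "\<not> good V r (arcf F' (g' t) h own \<sigma>)" for \<sigma>
    proof
      assume gd: "good V r (arcf F' (g' t) h own \<sigma>)"
      let ?f = "arcf F' (g' t) h own \<sigma>"
      have "(s, r) \<in> (rel V r ?f)\<^sup>*" using gd sV by (auto simp: good_def)
      moreover have "s \<in> C" by (simp add: C_def)
      moreover have "v \<in> C" if "(u, v) \<in> rel V r ?f" "u \<in> C" for u v
      proof (cases "u = s")
        case True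
        then show ?thesis using that t by (auto simp: rel_iff arcf_def F'_def g'_def AC_def C_def)
      next
        case False
        from \<open>u \<in> C\<close> have "(u, s) \<in> R\<^sup>*" by (simp add: C_def)
        then obtain y where "(u, y) \<in> R" "(y, s) \<in> R\<^sup>*" using False by (auto elim: converse_rtranclE)
        then show ?thesis using that False by (auto simp: rel_iff R_def arcf_def F'_def g'_def C_def)
      qed
      ultimately have "r \<in> C" by (rule closed_rtrancl)
      then have "(r, s) \<in> R\<^sup>*" by (simp add: C_def)
      then show False using rs rsink by (auto elim: converse_rtranclE)
    qed
    then show ?thesis by (auto simp: Inj_def)
  qed
  have Rsub: "R \<subseteq> R' t" for t using sF by (auto simp: R_def R'_def rel_iff F'_def g'_def)
  have R'star: "(v, r) \<in> (R' t)\<^sup>* \<longleftrightarrow> (v, r) \<in> R\<^sup>* \<or> ((v, s) \<in> R\<^sup>* \<and> (own t, r) \<in> R\<^sup>*)"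
    if t: "t \<in> T - AC" for t v
  proof
    assume "(v, r) \<in> (R' t)\<^sup>*"
    then show "(v, r) \<in> R\<^sup>* \<or> ((v, s) \<in> R\<^sup>* \<and> (own t, r) \<in> R\<^sup>*)"
    proof (induction rule: converse_rtrancl_induct)
      case base
      then show ?case by simp
    next
      case (step x y)
      show ?case
      proof (cases "x = s")
        case True
        then have "y = own t" using step.hyps by (auto simp: R'_def rel_iff g'_def)
        then show ?thesis using step.IH t True by (auto simp: AC_def)
      next
        case False
        then have "(x, y) \<in> R" using step.hyps by (auto simp: R'_def R_def rel_iff g'_def F'_def)
        then show ?thesis using step.IH by (meson converse_rtrancl_into_rtrancl)
      qed
    qed
  next
    assume a: "(v, r) \<in> R\<^sup>* \<or> ((v, s) \<in> R\<^sup>* \<and> (own t, r) \<in> R\<^sup>*)"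
    have st: "(s, own t) \<in> R' t" using sV rs by (auto simp: R'_def rel_iff F'_def g'_def)
    have mono: "R\<^sup>* \<subseteq> (R' t)\<^sup>*" using Rsub[of t] by (rule rtrancl_mono)
    from a show "(v, r) \<in> (R' t)\<^sup>*"
    proof
      assume "(v, r) \<in> R\<^sup>*" then show ?thesis using mono by auto
    next
      assume b: "(v, s) \<in> R\<^sup>* \<and> (own t, r) \<in> R\<^sup>*"
      then have "(v, s) \<in> (R' t)\<^sup>*" "(own t, r) \<in> (R' t)\<^sup>*" using mono by auto
      then show ?thesis using st by (meson rtrancl_into_rtrancl rtrancl_trans)
    qed
  qed
  have reach': "\<forall>v\<in>V. \<exists>u\<in>insert r F'. (v, u) \<in> (R' t)\<^sup>*" if t: "t \<in> T - AC" for t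
  proof
    fix v assume vV: "v \<in> V"
    have mono: "R\<^sup>* \<subseteq> (R' t)\<^sup>*" using Rsub[of t] by (rule rtrancl_mono)
    obtain u where u: "u \<in> insert r F" "(v, u) \<in> R\<^sup>*" using hyp(12) vV by (auto simp: R_def)
    show "\<exists>u\<in>insert r F'. (v, u) \<in> (R' t)\<^sup>*"
    proof (cases "u = s")
      case False
      then show ?thesis using u mono by (auto simp: F'_def)
    next
      case True
      have "own t \<in> V" using t hyp(11) by auto
      then obtain u' where u': "u' \<in> insert r F" "(own t, u') \<in> R\<^sup>*" using hyp(12) by (auto simp: R_def)
      have "u' \<noteq> s" using u' t by (auto simp: AC_def)
      have st: "(s, own t) \<in> R' t" using sV rs by (auto simp: R'_def rel_iff F'_def g'_def)
      have "(v, s) \<in> (R' t)\<^sup>*" using u True mono by auto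
      then have "(v, own t) \<in> (R' t)\<^sup>*" using st by (rule rtrancl_into_rtrancl)
      moreover have "(own t, u') \<in> (R' t)\<^sup>*" using u' mono by auto
      ultimately have "(v, u') \<in> (R' t)\<^sup>*" by (rule rtrancl_trans)
      then show ?thesis using u' \<open>u' \<noteq> s\<close> by (auto simp: F'_def)
    qed
  qed
  have cardW: "card (W - {h s}) = card W - 1" and cardT: "\<And>t. t \<in> T \<Longrightarrow> card (T - {t}) = card T - 1"
    using hsW hyp(6,7) by auto
  have cW1: "card W \<ge> 1" 
  proof -
    have "card W > 0" using hsW hyp(6) card_gt_0_iff by blast
    then show ?thesis by simp
  qed
  have diff: "\<And>t. t \<in> T \<Longrightarrow> card (T - {t}) - card (W - {h s}) = card T - card W"
    using cardW cardT cW1 by auto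
  have hF': "h ` F' \<subseteq> W - {h s}" using hyp(8,9) sF by (auto simp: F'_def inj_on_def)
  have AC_T: "AC \<subseteq> T" "A0 \<subseteq> T" by (auto simp: AC_def A0_def)
  have fin: "finite AC" "finite A0" using AC_T hyp(7) by (auto intro: finite_subset)
  let ?X = "\<lambda>t. card (Inj (W - {h s}) (T - {t}) (\<lambda>\<sigma>. good V r (arcf F' (g' t) h own \<sigma>)))"
  have sumsplit: "(\<Sum>t\<in>T. ?X t) = (\<Sum>t\<in>T - AC. ?X t)"
  proof -
    have "(\<Sum>t\<in>T. ?X t) = (\<Sum>t\<in>T - AC. ?X t) + (\<Sum>t\<in>AC. ?X t)"
      using sum.subset_diff[OF AC_T(1) hyp(7)] by simp
    moreover have "(\<Sum>t\<in>AC. ?X t) = 0" using bad by simp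
    ultimately show ?thesis by simp
  qed
  show ?case
  proof (cases "F' = {}")
    case True
    then have Fs: "F = {s}" using sF by (auto simp: F'_def)
    have X: "?X t * fact (card T - card W) = fact (card T - 1)" if t: "t \<in> T - AC" for t
    proof -
      have "Inj (W - {h s}) (T - {t}) (\<lambda>\<sigma>. good V r (arcf F' (g' t) h own \<sigma>)) =
            Inj (W - {h s}) (T - {t}) (\<lambda>_. True)"
        using reach'[OF t] True by (simp add: good_empty R'_def Inj_def)
      moreover have "card (W - {h s}) \<le> card (T - {t})" using cardW cardT t hyp(10) by auto
      ultimately show ?thesis using Inj_count[of "W - {h s}" "T - {t}"] hyp(6,7) t diff cardT by auto
    qed
    have TA: "T - AC = A0"
    proof -
      have "t \<in> A0" if "t \<in> T - AC" for t
      proof -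
        have "own t \<in> V" using that hyp(11) by auto
        then obtain u where "u \<in> {r, s}" "(own t, u) \<in> R\<^sup>*" using hyp(12) Fs by (auto simp: R_def)
        then show ?thesis using that by (auto simp: A0_def AC_def)
      qed
      then show ?thesis using A0AC AC_T by auto
    qed
    have "card (Inj W T (\<lambda>\<sigma>. good V r (arcf F g h own \<sigma>))) * fact (card T - card W)
        = (\<Sum>t\<in>T - AC. ?X t * fact (card T - card W))"
      using split sumsplit by (simp add: sum_distrib_right)
    also have "\<dots> = card A0 * fact (card T - 1)" using X TA by simp
    finally show ?thesis by (simp add: A0_def R_def)
  next
    case False
    have cF: "card F' = n" using Suc.prems(1) sF hyp(2) by (auto simp: F'_def)
    have X: "?X t * fact (card T - card W) = card {t'\<in>T - {t}. (own t', r) \<in> (R' t)\<^sup>*} * fact (card T - 2)"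
      if t: "t \<in> T - AC" for t
    proof -
      have "?X t * fact (card (T - {t}) - card (W - {h s})) =
          card {t'\<in>T - {t}. (own t', r) \<in> (R' t)\<^sup>*} * fact (card (T - {t}) - 1)"
        unfolding R'_def
        apply (rule Suc.IH[OF cF])
        using hyp t False hF' cardW cardT reach'[OF t] by (auto simp: F'_def inj_on_def R'_def)
      then show ?thesis using diff cardT t by (auto simp: numeral_2_eq_2)
    qed
    have a': "card {t'\<in>T - {t}. (own t', r) \<in> (R' t)\<^sup>*} = (if t \<in> A0 then card A0 + card AC - 1 else card A0)"
      if t: "t \<in> T - AC" for t
    proof -
      have "{t'\<in>T - {t}. (own t', r) \<in> (R' t)\<^sup>*} = (if t \<in> A0 then (A0 \<union> AC) - {t} else A0 - {t})"
        using R'star[OF t] t by (auto simp: A0_def AC_def)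
      then show ?thesis using A0AC fin by (auto simp: card_Un_disjoint)
    qed
    have cF2: "card F \<ge> 2" using False sF hyp(2) unfolding F'_def
    proof -
      have "card F' > 0" using False hyp(2) by (simp add: F'_def card_gt_0_iff)
      then show ?thesis using cF Suc.prems(1) by linarith
    qed
    have cT2: "card T \<ge> 2"
    proof -
      have "card (h ` F) = card F" using hyp(8) by (simp add: card_image)
      moreover have "card (h ` F) \<le> card W" using hyp(9,6) by (simp add: card_mono)
      ultimately show ?thesis using cF2 hyp(10) by linarith
    qed
    have sumeq: "(\<Sum>t\<in>T - AC. card {t'\<in>T - {t}. (own t', r) \<in> (R' t)\<^sup>*}) = card A0 * (card T - 1)"
    proof -
      have "(\<Sum>t\<in>T - AC. card {t'\<in>T - {t}. (own t', r) \<in> (R' t)\<^sup>*})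
           = (\<Sum>t\<in>T - AC. (if t \<in> A0 then card A0 + card AC - 1 else card A0))"
        using a' by simp
      also have "\<dots> = (\<Sum>t\<in>A0. card A0 + card AC - 1) + (\<Sum>t\<in>T - AC - A0. card A0)"
      proof -
        have "T - AC = A0 \<union> (T - AC - A0)" using A0AC AC_T by auto
        then have "(\<Sum>t\<in>T - AC. (if t \<in> A0 then card A0 + card AC - 1 else card A0)) =
          (\<Sum>t\<in>A0. (if t \<in> A0 then card A0 + card AC - 1 else card A0)) + (\<Sum>t\<in>T - AC - A0. (if t \<in> A0 then card A0 + card AC - 1 else card A0))"
          using fin hyp(7) by (metis (no_types, lifting) Diff_disjoint finite_Diff sum.union_disjoint)
        then show ?thesis by simp
      qed
      also have "\<dots> = card A0 * (card A0 + card AC - 1) + (card T - card AC - card A0) * card A0"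
      proof -
        have "card (T - AC - A0) = card T - card AC - card A0"
        proof -
          have 1: "card (T - AC) = card T - card AC" using AC_T fin by (simp add: card_Diff_subset)
          have "A0 \<subseteq> T - AC" using A0AC AC_T by auto
          then have "card (T - AC - A0) = card (T - AC) - card A0" using fin by (simp add: card_Diff_subset)
          then show ?thesis using 1 by simp
        qed
        then show ?thesis by simp
      qed
      also have "\<dots> = card A0 * (card T - 1)"
      proof -
        have le: "card A0 + card AC \<le> card T"
        proof -
          have "card (A0 \<union> AC) = card A0 + card AC" using A0AC fin by (simp add: card_Un_disjoint)
          moreover have "card (A0 \<union> AC) \<le> card T" using AC_T hyp(7) by (simp add: card_mono)
          ultimately show ?thesis by simp
        qed
        show ?thesis
        proof (cases "card A0 = 0")
          case True then show ?thesis by simp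
        next
          case False
          then have "(card A0 + card AC - 1) + (card T - card AC - card A0) = card T - 1" using le by linarith
          then show ?thesis by (metis add_mult_distrib2 mult.commute)
        qed
      qed
      finally show ?thesis .
    qed
    have "card (Inj W T (\<lambda>\<sigma>. good V r (arcf F g h own \<sigma>))) * fact (card T - card W)
        = (\<Sum>t\<in>T - AC. ?X t * fact (card T - card W))"
      using split sumsplit by (simp add: sum_distrib_right)
    also have "\<dots> = (\<Sum>t\<in>T - AC. card {t'\<in>T - {t}. (own t', r) \<in> (R' t)\<^sup>*}) * fact (card T - 2)"
      using X by (simp add: sum_distrib_right)
    also have "\<dots> = card A0 * ((card T - 1) * fact (card T - 2))" using sumeq by simp
    also have "(card T - 1) * fact (card T - 2) = fact (card T - 1)"
    proof -
      obtain m where "card T = Suc (Suc m)" using cT2 by (metis add_2_eq_Suc le_Suc_ex)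
      then show ?thesis by simp
    qed
    finally show ?thesis by (simp add: A0_def R_def)
  qed
qed



definition ES :: "bool list \<Rightarrow> nat set" where "ES w = {i. i < length w \<and> w ! i}"
definition EL :: "bool list \<Rightarrow> nat list" where "EL w = sorted_list_of_set (ES w)"
definition cnt :: "bool list \<Rightarrow> nat \<Rightarrow> nat" where "cnt w i = card {k. k < i \<and> w ! k}"

lemma ES_finite: "finite (ES w)" by (simp add: ES_def)

lemma card_ES: "card (ES w) = length (filter id w)"
  by (simp add: ES_def length_filter_conv_card)

lemma length_EL: "length (EL w) = length (filter id w)"
  by (simp add: EL_def card_ES)

lemma set_EL: "set (EL w) = ES w" by (simp add: EL_def ES_finite)

lemma EL_sorted: "sorted_wrt (<) (EL w)"
  unfolding EL_def by (simp add: strict_sorted_iff)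

lemma EL_mono: "i < j \<Longrightarrow> j < length (EL w) \<Longrightarrow> EL w ! i < EL w ! j"
  using EL_sorted sorted_wrt_nth_less by blast

lemma EL_mem: "j < length (EL w) \<Longrightarrow> EL w ! j < length w \<and> w ! (EL w ! j)"
  using set_EL[of w] nth_mem[of j "EL w"] by (auto simp: ES_def)

lemma EL_ge: "j < length (EL w) \<Longrightarrow> j \<le> EL w ! j"
proof (induction j)
  case 0 then show ?case by simp
next
  case (Suc j) then show ?case using EL_mono[of j "Suc j" w] by simp
qed

lemma cnt_EL: assumes "j < length (EL w)" shows "cnt w (EL w ! j) = j"
proof -
  have "{k. k < EL w ! j \<and> w ! k} = (\<lambda>i. EL w ! i) ` {..<j}"
  proof
    show "{k. k < EL w ! j \<and> w ! k} \<subseteq> (\<lambda>i. EL w ! i) ` {..<j}"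
    proof
      fix k assume k: "k \<in> {k. k < EL w ! j \<and> w ! k}"
      then have "k < length w" using EL_mem[OF assms] by auto
      then have "k \<in> set (EL w)" using k by (simp add: set_EL ES_def)
      then obtain i where i: "i < length (EL w)" "EL w ! i = k" by (auto simp: in_set_conv_nth)
      have "i < j"
      proof (rule ccontr)
        assume "\<not> i < j"
        then have "j \<le> i" by simp
        then have "EL w ! j \<le> EL w ! i" using EL_mono[of j i w] i by (cases "j = i") auto
        then show False using k i by auto
      qed
      then show "k \<in> (\<lambda>i. EL w ! i) ` {..<j}" using i by auto
    qed
  next
    show "(\<lambda>i. EL w ! i) ` {..<j} \<subseteq> {k. k < EL w ! j \<and> w ! k}"
      using EL_mono[of _ j w] EL_mem[of _ w] assms by auto
  qed
  moreover have "inj_on (\<lambda>i. EL w ! i) {..<j}"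
    by (rule inj_onI) (metis EL_mono assms lessThan_iff less_trans nat_neq_iff)
  ultimately show ?thesis by (simp add: cnt_def card_image)
qed

lemma EL_cnt: assumes "i < length w" "w ! i" shows "EL w ! cnt w i = i" "cnt w i < length (EL w)"
proof -
  have "i \<in> set (EL w)" using assms by (simp add: set_EL ES_def)
  then obtain m where m: "m < length (EL w)" "EL w ! m = i" by (auto simp: in_set_conv_nth)
  then have "cnt w i = m" using cnt_EL by blast
  then show "EL w ! cnt w i = i" "cnt w i < length (EL w)" using m by auto
qed

lemma cnt_Suc: "cnt w (Suc i) = (if w ! i then Suc (cnt w i) else cnt w i)"
proof -
  have "{k. k < Suc i \<and> w ! k} = (if w ! i then insert i {k. k < i \<and> w ! k} else {k. k < i \<and> w ! k})"
    by (auto simp: less_Suc_eq)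
  then show ?thesis by (simp add: cnt_def)
qed

lemma voe_cnt: "i \<le> length w \<Longrightarrow> vertex_of_edge w i = cnt w i"
proof -
  assume "i \<le> length w"
  then have "{ia. ia < length (take i w) \<and> take i w ! ia} = {k. k < i \<and> w ! k}" by auto
  then show ?thesis by (simp add: vertex_of_edge_def length_filter_conv_card cnt_def)
qed

lemma edge_pos_EL: "edge_pos w j = EL w ! j"
  by (simp add: edge_pos_def EL_def ES_def)



definition Fset :: "bool list \<Rightarrow> nat \<Rightarrow> nat set" where
  "Fset w p = {j. 0 < j \<and> j < p \<and> \<not> w ! (EL w ! j - 1)}"
definition hfun :: "bool list \<Rightarrow> nat \<Rightarrow> nat" where "hfun w j = EL w ! j - 1"
definition gfun :: "nat \<Rightarrow> nat" where "gfun j = j - 1"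
definition Rf :: "bool list \<Rightarrow> nat \<Rightarrow> (nat \<times> nat) set" where
  "Rf w p = rel ({0..<p} - Fset w p) 0 gfun"

lemma EL_pos: "0 < j \<Longrightarrow> j < length (EL w) \<Longrightarrow> 0 < EL w ! j"
  using EL_mono[of 0 j w] by simp

lemma cnt_pred: assumes "0 < j" "j < length (EL w)" "w ! (EL w ! j - 1)"
  shows "cnt w (EL w ! j - 1) = j - 1"
proof -
  have pos: "0 < EL w ! j" using EL_pos assms by blast
  have "cnt w (Suc (EL w ! j - 1)) = Suc (cnt w (EL w ! j - 1))" using assms(3) by (simp add: cnt_Suc)
  then show ?thesis using pos cnt_EL[OF assms(2)] by simp
qed

lemma arc_eq:
  assumes "length (filter id w) = p" "0 < j" "j < p"
  shows "arc_target w \<sigma> j = arcf (Fset w p) gfun (hfun w) fst \<sigma> j"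
proof -
  have jl: "j < length (EL w)" using assms by (simp add: length_EL)
  have pos: "0 < EL w ! j" using EL_pos jl assms by blast
  have "EL w ! j < length w" using EL_mem[OF jl] by simp
  then have lt: "EL w ! j - 1 \<le> length w" by simp
  show ?thesis
  proof (cases "w ! (EL w ! j - 1)")
    case True
    then show ?thesis using cnt_pred[OF assms(2) jl True] voe_cnt[OF lt]
      by (simp add: arc_target_def arcf_def Fset_def gfun_def edge_pos_EL)
  next
    case False
    then show ?thesis using assms by (simp add: arc_target_def arcf_def Fset_def hfun_def edge_pos_EL)
  qed
qed

lemma arcs_G_eq:
  assumes "length (filter id w) = length ds"
  shows "arcs_G ((w, ds), \<sigma>) = rel {0..<length ds} 0 (arcf (Fset w (length ds)) gfun (hfun w) fst \<sigma>)"
  using arc_eq[OF assms] unfolding arcs_G_def rel_def by (auto; metis neq0_conv)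

lemma otree_good:
  assumes "r \<in> V" "\<And>v. v \<in> V \<Longrightarrow> v \<noteq> r \<Longrightarrow> f v \<in> V"
  shows "oriented_tree V (rel V r f) r \<longleftrightarrow> good V r f"
  using assms unfolding oriented_tree_def good_def by (auto simp: rel_iff)

lemma reach_app: "\<forall>v\<in>{0..<p}. \<exists>u\<in>insert 0 (Fset w p). (v, u) \<in> (Rf w p)\<^sup>*"
proof
  fix v assume "v \<in> {0..<p}"
  then show "\<exists>u\<in>insert 0 (Fset w p). (v, u) \<in> (Rf w p)\<^sup>*"
  proof (induction v)
    case 0 then show ?case by auto
  next
    case (Suc v)
    show ?case
    proof (cases "Suc v \<in> Fset w p")
      case True then show ?thesis by auto
    next
      case False
      then have "(Suc v, v) \<in> Rf w p" using Suc.prems by (auto simp: Rf_def rel_iff gfun_def)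
      moreover obtain u where "u \<in> insert 0 (Fset w p)" "(v, u) \<in> (Rf w p)\<^sup>*" using Suc by auto
      ultimately show ?thesis by (meson converse_rtrancl_into_rtrancl)
    qed
  qed
qed

lemma Gr_step1: "v < p \<Longrightarrow> (v, 0) \<in> (Rf w p)\<^sup>* \<longleftrightarrow> (\<forall>j. 0 < j \<and> j \<le> v \<longrightarrow> j \<notin> Fset w p)"
proof
  assume "(v, 0) \<in> (Rf w p)\<^sup>*"
  then show "\<forall>j. 0 < j \<and> j \<le> v \<longrightarrow> j \<notin> Fset w p"
  proof (induction rule: converse_rtrancl_induct)
    case base then show ?case by auto
  next
    case (step x y)
    then have "x \<notin> Fset w p" "x \<noteq> 0" "y = x - 1" by (auto simp: Rf_def rel_iff gfun_def)
    then show ?case using step.IH by (metis Suc_pred' le_Suc_eq neq0_conv)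
  qed
next
  assume v: "v < p" and a: "\<forall>j. 0 < j \<and> j \<le> v \<longrightarrow> j \<notin> Fset w p"
  from v a show "(v, 0) \<in> (Rf w p)\<^sup>*"
  proof (induction v)
    case 0 then show ?case by simp
  next
    case (Suc v)
    then have "(Suc v, v) \<in> Rf w p" by (auto simp: Rf_def rel_iff gfun_def)
    moreover have "(v, 0) \<in> (Rf w p)\<^sup>*" using Suc by auto
    ultimately show ?case by (meson converse_rtrancl_into_rtrancl)
  qed
qed

lemma EL_id_iff:
  assumes "length (filter id w) = p" "v < p"
  shows "(\<forall>j\<le>v. EL w ! j = j) \<longleftrightarrow> (\<forall>i\<le>v. w ! i)"
proof
  assume a: "\<forall>j\<le>v. EL w ! j = j"
  show "\<forall>i\<le>v. w ! i"
  proof (intro allI impI)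
    fix i assume "i \<le> v"
    then have "i < length (EL w)" "EL w ! i = i" using a assms by (auto simp: length_EL)
    then show "w ! i" using EL_mem by metis
  qed
next
  assume a: "\<forall>i\<le>v. w ! i"
  have lw: "v < length w"
  proof -
    have "length (filter id w) \<le> length w" by simp
    then show ?thesis using assms by simp
  qed
  show "\<forall>j\<le>v. EL w ! j = j"
  proof (intro allI impI)
    fix j assume j: "j \<le> v"
    have "cnt w j = j"
    proof -
      have "{k. k < j \<and> w ! k} = {..<j}" using a j by auto
      then show ?thesis by (simp add: cnt_def)
    qed
    then show "EL w ! j = j" using EL_cnt(1)[of j w] a j lw by auto
  qed
qed

lemma F_EL_iff:
  assumes "length (filter id w) = p" "v < p" "w ! 0"
  shows "(\<forall>j. 0 < j \<and> j \<le> v \<longrightarrow> j \<notin> Fset w p) \<longleftrightarrow> (\<forall>j\<le>v. EL w ! j = j)"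
proof -
  have lEL: "length (EL w) = p" using assms by (simp add: length_EL)
  have lw: "0 < length w" using assms by (cases w) auto
  have E0: "EL w ! 0 = 0" using EL_cnt(1)[OF lw assms(3)] by (simp add: cnt_def)
  show ?thesis
  proof
    assume a: "\<forall>j. 0 < j \<and> j \<le> v \<longrightarrow> j \<notin> Fset w p"
    show "\<forall>j\<le>v. EL w ! j = j"
    proof (intro allI impI)
      fix j assume "j \<le> v"
      then show "EL w ! j = j"
      proof (induction j)
        case 0 then show ?case using E0 by simp
      next
        case (Suc j)
        have jl: "Suc j < length (EL w)" using Suc.prems assms lEL by simp
        have edge: "w ! (EL w ! Suc j - 1)" using a Suc.prems assms by (auto simp: Fset_def)
        have c: "cnt w (EL w ! Suc j - 1) = j" using cnt_pred[OF _ jl edge] by simp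
        have "EL w ! Suc j < length w" using EL_mem[OF jl] by simp
        then have "EL w ! Suc j - 1 < length w" by simp
        then have "EL w ! j = EL w ! Suc j - 1" using EL_cnt(1)[OF _ edge] c by simp
        then show ?case using Suc EL_pos[OF _ jl] by simp
      qed
    qed
  next
    assume a: "\<forall>j\<le>v. EL w ! j = j"
    show "\<forall>j. 0 < j \<and> j \<le> v \<longrightarrow> j \<notin> Fset w p"
    proof (intro allI impI)
      fix j assume j: "0 < j \<and> j \<le> v"
      then have "EL w ! j - 1 = j - 1" "EL w ! (j - 1) = j - 1" using a by auto
      moreover have "j - 1 < length (EL w)" using j assms lEL by linarith
      ultimately have "w ! (EL w ! j - 1)" using EL_mem by metis
      then show "j \<notin> Fset w p" by (simp add: Fset_def)
    qed
  qed
qed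

lemma Gr_app:
  assumes "length (filter id w) = p" "v < p" "w ! 0"
  shows "(v, 0) \<in> (Rf w p)\<^sup>* \<longleftrightarrow> (\<forall>i\<le>v. w ! i)"
  using Gr_step1[OF assms(2)] F_EL_iff[OF assms] EL_id_iff[OF assms(1,2)] by simp

lemma h_inj: "length (filter id w) = p \<Longrightarrow> inj_on (hfun w) (Fset w p)"
proof (rule inj_onI)
  fix i j assume l: "length (filter id w) = p" and ij: "i \<in> Fset w p" "j \<in> Fset w p" "hfun w i = hfun w j"
  have il: "i < length (EL w)" "j < length (EL w)" "0 < i" "0 < j" using ij l by (auto simp: Fset_def length_EL)
  then have "EL w ! i = EL w ! j" using ij(3) EL_pos[of i w] EL_pos[of j w] by (simp add: hfun_def)
  then show "i = j" using EL_mono il by (metis nat_neq_iff less_irrefl)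
qed

lemma h_into: "length (filter id w) = p \<Longrightarrow> hfun w ` Fset w p \<subseteq> white_thorns w"
proof
  fix x assume l: "length (filter id w) = p" and "x \<in> hfun w ` Fset w p"
  then obtain j where j: "j \<in> Fset w p" "x = hfun w j" by auto
  then have "j < length (EL w)" using l by (simp add: Fset_def length_EL)
  then have "EL w ! j < length w" using EL_mem by blast
  then show "x \<in> white_thorns w" using j by (auto simp: white_thorns_def hfun_def Fset_def)
qed



lemma WT_finite: "finite (white_thorns w)" by (simp add: white_thorns_def)

lemma card_WT: "card (white_thorns w) = length w - length (filter id w)"
proof -
  have "card (white_thorns w) = length (filter (\<lambda>x. \<not> id x) w)"
    by (simp add: white_thorns_def length_filter_conv_card)
  moreover have "length (filter id w) + length (filter (\<lambda>x. \<not> id x) w) = length w"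
    by (rule sum_length_filter_compl)
  ultimately show ?thesis by simp
qed

lemma BT_Sigma: "black_thorns ds = Sigma {..<length ds} (\<lambda>j. {..<ds ! j - 1})"
  by (auto simp: black_thorns_def)

lemma BT_finite: "finite (black_thorns ds)" by (simp add: BT_Sigma)

lemma card_BT:
  assumes "\<forall>x\<in>set ds. 0 < x"
  shows "card (black_thorns ds) = sum_list ds - length ds"
proof -
  have "card (black_thorns ds) = (\<Sum>j<length ds. ds ! j - 1)" by (simp add: BT_Sigma)
  also have "\<dots> = (\<Sum>j<length ds. ds ! j) - (\<Sum>j<length ds. 1)"
    using assms by (intro sum_subtractf_nat) (auto simp: Suc_le_eq)
  also have "(\<Sum>j<length ds. ds ! j) = sum_list ds"
    by (simp add: sum_list_sum_nth atLeast0LessThan)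
  finally show ?thesis by simp
qed

lemma bij_iff:
  assumes "finite A" "finite B" "card A = card B"
  shows "bij_betw f A B \<longleftrightarrow> inj_on f A \<and> f ` A \<subseteq> B"
proof
  assume "inj_on f A \<and> f ` A \<subseteq> B"
  moreover then have "card (f ` A) = card B" using assms by (simp add: card_image)
  ultimately show "bij_betw f A B" using assms by (metis bij_betw_def card_subset_eq)
qed (auto simp: bij_betw_def)

definition SS :: "bool list \<Rightarrow> nat list \<Rightarrow> ((nat \<Rightarrow> nat \<times> nat) \<Rightarrow> bool) \<Rightarrow> (nat \<Rightarrow> nat \<times> nat) set" where
  "SS w ds Q = {\<sigma>. \<sigma> \<in> extensional (white_thorns w) \<and> bij_betw \<sigma> (white_thorns w) (black_thorns ds) \<and> Q \<sigma>}"

lemma SS_Inj: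
  assumes "card (white_thorns w) = card (black_thorns ds)"
  shows "SS w ds Q = Inj (white_thorns w) (black_thorns ds) Q"
  using bij_iff[OF WT_finite BT_finite assms] by (auto simp: SS_def Inj_def)

lemma SS_finite: "finite (SS w ds Q)"
proof -
  have "SS w ds Q \<subseteq> Inj (white_thorns w) (black_thorns ds) (\<lambda>_. True)"
    by (auto simp: SS_def Inj_def bij_betw_def)
  then show ?thesis using Inj_finite[OF WT_finite BT_finite] finite_subset by blast
qed

lemma card_SS_all:
  assumes "card (white_thorns w) = card (black_thorns ds)"
  shows "card (SS w ds (\<lambda>_. True)) = fact (card (black_thorns ds))"
  using Inj_count[OF WT_finite BT_finite, of w ds] assms by (simp add: SS_Inj)

definition aval :: "bool list \<Rightarrow> nat list \<Rightarrow> nat" where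
  "aval w ds = (\<Sum>v<length ds. if (\<forall>i\<le>v. w ! i) then ds ! v - 1 else 0)"

lemma P2_good:
  assumes "length (filter id w) = length ds" "0 < length ds" "\<sigma> ` white_thorns w \<subseteq> black_thorns ds"
  shows "P2 ((w, ds), \<sigma>) \<longleftrightarrow> good {0..<length ds} 0 (arcf (Fset w (length ds)) gfun (hfun w) fst \<sigma>)"
proof -
  let ?p = "length ds"
  have "arcf (Fset w ?p) gfun (hfun w) fst \<sigma> v \<in> {0..<?p}" if "v \<in> {0..<?p}" "v \<noteq> 0" for v
  proof (cases "v \<in> Fset w ?p")
    case True
    then have "hfun w v \<in> white_thorns w" using h_into[OF assms(1)] by auto
    then have "\<sigma> (hfun w v) \<in> black_thorns ds" using assms(3) by auto
    then show ?thesis using True by (auto simp: arcf_def black_thorns_def)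
  next
    case False then show ?thesis using that by (auto simp: arcf_def gfun_def)
  qed
  then show ?thesis
    unfolding P2_def using otree_good[of 0 "{0..<?p}"] assms arcs_G_eq[OF assms(1)] by simp
qed

lemma card_SS_P2:
  assumes l: "length (filter id w) = length ds" and p0: "0 < length ds" and w0: "w ! 0"
    and pos: "\<forall>x\<in>set ds. 0 < x"
    and cardeq: "card (white_thorns w) = card (black_thorns ds)"
    and q1: "1 \<le> card (black_thorns ds)"
  shows "card (SS w ds (\<lambda>\<sigma>. P2 ((w, ds), \<sigma>))) = aval w ds * fact (card (black_thorns ds) - 1)"
proof -
  let ?p = "length ds" and ?F = "Fset w (length ds)" and ?W = "white_thorns w" and ?T = "black_thorns ds"
  have SSeq: "SS w ds (\<lambda>\<sigma>. P2 ((w, ds), \<sigma>)) = Inj ?W ?T (\<lambda>\<sigma>. good {0..<?p} 0 (arcf ?F gfun (hfun w) fst \<sigma>))"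
    unfolding SS_Inj[OF cardeq] Inj_def using P2_good[OF l p0] by auto
  have Gr: "{t\<in>?T. (fst t, 0) \<in> (rel ({0..<?p} - ?F) 0 gfun)\<^sup>*} = Sigma {v. v < ?p \<and> (\<forall>i\<le>v. w ! i)} (\<lambda>j. {..<ds ! j - 1})"
    using Gr_app[OF l _ w0] by (auto simp: BT_Sigma Rf_def)
  have a: "card {t\<in>?T. (fst t, 0) \<in> (rel ({0..<?p} - ?F) 0 gfun)\<^sup>*} = aval w ds"
  proof -
    have "card (Sigma {v. v < ?p \<and> (\<forall>i\<le>v. w ! i)} (\<lambda>j. {..<ds ! j - 1})) = (\<Sum>v\<in>{v. v < ?p \<and> (\<forall>i\<le>v. w ! i)}. ds ! v - 1)"
      by (subst card_SigmaI) auto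
    also have "\<dots> = aval w ds"
    proof -
      have "{v. v < ?p \<and> (\<forall>i\<le>v. w ! i)} = {v \<in> {..<?p}. (\<forall>i\<le>v. w ! i)}" by auto
      then show "(\<Sum>v\<in>{v. v < ?p \<and> (\<forall>i\<le>v. w ! i)}. ds ! v - 1) = aval w ds"
        unfolding aval_def by (simp only: sum.inter_filter finite_lessThan)
    qed
    finally show ?thesis using Gr by simp
  qed
  show ?thesis
  proof (cases "?F = {}")
    case False
    have "card (Inj ?W ?T (\<lambda>\<sigma>. good {0..<?p} 0 (arcf ?F gfun (hfun w) fst \<sigma>))) * fact (card ?T - card ?W)
        = card {t\<in>?T. (fst t, 0) \<in> (rel ({0..<?p} - ?F) 0 gfun)\<^sup>*} * fact (card ?T - 1)"
    proof (rule tree_count[OF refl _ _ _ False WT_finite BT_finite h_inj[OF l] h_into[OF l]])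
      show "finite ?F" by (simp add: Fset_def)
      show "0 \<notin> ?F" by (simp add: Fset_def)
      show "?F \<subseteq> {0..<?p}" by (auto simp: Fset_def)
      show "card ?W \<le> card ?T" using cardeq by simp
      show "fst ` ?T \<subseteq> {0..<?p}" by (auto simp: black_thorns_def)
      show "\<forall>v\<in>{0..<?p}. \<exists>u\<in>insert 0 ?F. (v, u) \<in> (rel ({0..<?p} - ?F) 0 gfun)\<^sup>*"
        using reach_app[of ?p w] unfolding Rf_def .
    qed
    then show ?thesis using SSeq a cardeq by simp
  next
    case True
    have allr: "\<forall>v\<in>{0..<?p}. (v, 0) \<in> (rel ({0..<?p} - {}) 0 gfun)\<^sup>*"
      using reach_app[of ?p w] True by (simp add: Rf_def)
    have "Inj ?W ?T (\<lambda>\<sigma>. good {0..<?p} 0 (arcf ?F gfun (hfun w) fst \<sigma>)) = Inj ?W ?T (\<lambda>_. True)"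
      using allr True by (simp add: good_empty)
    then have "card (SS w ds (\<lambda>\<sigma>. P2 ((w, ds), \<sigma>))) = card (Inj ?W ?T (\<lambda>_. True))"
      using SSeq by simp
    also have "\<dots> = fact (card ?T)"
      using Inj_count[OF WT_finite BT_finite, of w ds] cardeq by simp
    finally have c1: "card (SS w ds (\<lambda>\<sigma>. P2 ((w, ds), \<sigma>))) = fact (card ?T)" .
    have "{t\<in>?T. (fst t, 0) \<in> (rel ({0..<?p} - ?F) 0 gfun)\<^sup>*} = ?T"
    proof (intro equalityI subsetI)
      fix t assume t: "t \<in> ?T"
      then have "fst t \<in> {0..<?p}" by (cases t) (simp add: black_thorns_def)
      then show "t \<in> {t\<in>?T. (fst t, 0) \<in> (rel ({0..<?p} - ?F) 0 gfun)\<^sup>*}"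
        using allr True t by simp
    qed simp
    then have c2: "aval w ds = card ?T" using a by simp
    obtain m where "card ?T = Suc m" using q1 by (metis Suc_pred' less_le_trans zero_less_one)
    then show ?thesis using c1 c2 by simp
  qed
qed

lemma SS_P2_q0:
  assumes l: "length (filter id w) = length ds" and p0: "0 < length ds"
    and cardeq: "card (white_thorns w) = card (black_thorns ds)"
    and q0: "card (black_thorns ds) = 0"
  shows "SS w ds (\<lambda>\<sigma>. P2 ((w, ds), \<sigma>)) = SS w ds (\<lambda>_. True)"
proof -
  let ?p = "length ds" and ?F = "Fset w (length ds)"
  have "white_thorns w = {}" using cardeq q0 WT_finite by simp
  then have F: "?F = {}" using h_into[OF l] by auto
  have allr: "\<forall>v\<in>{0..<?p}. (v, 0) \<in> (rel ({0..<?p} - {}) 0 gfun)\<^sup>*"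
    using reach_app[of ?p w] F by (simp add: Rf_def)
  show ?thesis
    unfolding SS_def using P2_good[OF l p0] allr F by (auto simp: good_empty bij_betw_def)
qed



definition Wset :: "nat \<Rightarrow> nat \<Rightarrow> bool list set" where
  "Wset n k = {w. length w = n \<and> length (filter id w) = k}"

lemma Wset_finite: "finite (Wset n k)"
proof -
  have "Wset n k \<subseteq> {w. set w \<subseteq> UNIV \<and> length w = n}" by (auto simp: Wset_def)
  then show ?thesis using finite_lists_length_eq[of "UNIV :: bool set" n] finite_subset by auto
qed

lemma card_Wset: "card (Wset n k) = n choose k"
proof (induction n arbitrary: k)
  case 0
  have "Wset 0 k = (if k = 0 then {[]} else {})" by (auto simp: Wset_def)
  then show ?case by simp
next
  case (Suc n)
  have eq: "Wset (Suc n) k = (\<lambda>u. True # u) ` {u. length u = n \<and> Suc (length (filter id u)) = k}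
       \<union> (\<lambda>u. False # u) ` Wset n k"
  proof (intro equalityI subsetI)
    fix w assume "w \<in> Wset (Suc n) k"
    then show "w \<in> (\<lambda>u. True # u) ` {u. length u = n \<and> Suc (length (filter id u)) = k} \<union> (\<lambda>u. False # u) ` Wset n k"
      by (cases w) (auto simp: Wset_def split: if_splits)
  qed (auto simp: Wset_def)
  have disj: "(\<lambda>u. True # u) ` {u. length u = n \<and> Suc (length (filter id u)) = k} \<inter> (\<lambda>u. False # u) ` Wset n k = {}"
    by auto
  have fin1: "finite {u. length u = n \<and> Suc (length (filter id u)) = k}"
    by (rule finite_subset[OF _ Wset_finite[of n "k - 1"]]) (auto simp: Wset_def)
  have c2: "card ((\<lambda>u. False # u) ` Wset n k) = n choose k"
    using Suc.IH by (simp add: card_image)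
  show ?case
  proof (cases k)
    case 0
    then have "{u. length u = n \<and> Suc (length (filter id u)) = k} = {}" by auto
    then show ?thesis using eq c2 0 by simp
  next
    case (Suc k')
    then have "{u. length u = n \<and> Suc (length (filter id u)) = k} = Wset n k'" by (auto simp: Wset_def)
    then have "card ((\<lambda>u. True # u) ` {u. length u = n \<and> Suc (length (filter id u)) = k}) = n choose k'"
      using Suc.IH by (simp add: card_image)
    then show ?thesis
      using eq c2 Suc disj fin1 Wset_finite[of n k]
      by (simp add: card_Un_disjoint)
  qed
qed

lemma card_prefix:
  assumes "v < p" "p \<le> N"
  shows "card {w \<in> Wset N p. \<forall>i\<le>v. w ! i} = (N - Suc v) choose (p - Suc v)"
proof -
  let ?pre = "replicate (Suc v) True"
  have "{w \<in> Wset N p. \<forall>i\<le>v. w ! i} = (\<lambda>u. ?pre @ u) ` Wset (N - Suc v) (p - Suc v)"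
  proof (intro equalityI subsetI)
    fix w assume w: "w \<in> {w \<in> Wset N p. \<forall>i\<le>v. w ! i}"
    then have lw: "length w = N" and cw: "length (filter id w) = p" and pw: "\<forall>i\<le>v. w ! i"
      by (auto simp: Wset_def)
    have tk: "take (Suc v) w = ?pre"
      using pw assms lw by (intro nth_equalityI) (auto simp del: replicate_Suc)
    have "w = ?pre @ drop (Suc v) w" using tk by (metis append_take_drop_id)
    moreover have "drop (Suc v) w \<in> Wset (N - Suc v) (p - Suc v)"
    proof -
      have "length (filter id w) = length (filter id (take (Suc v) w)) + length (filter id (drop (Suc v) w))"
        by (metis append_take_drop_id filter_append length_append)
      then show ?thesis using tk cw lw by (simp add: Wset_def)
    qed
    ultimately show "w \<in> (\<lambda>u. ?pre @ u) ` Wset (N - Suc v) (p - Suc v)" by blast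
  next
    fix w assume "w \<in> (\<lambda>u. ?pre @ u) ` Wset (N - Suc v) (p - Suc v)"
    then obtain u where u: "u \<in> Wset (N - Suc v) (p - Suc v)" "w = ?pre @ u" by auto
    then show "w \<in> {w \<in> Wset N p. \<forall>i\<le>v. w ! i}"
      using assms by (auto simp: Wset_def nth_append simp del: replicate_Suc)
  qed
  moreover have "inj_on (\<lambda>u. ?pre @ u) (Wset (N - Suc v) (p - Suc v))" by (rule inj_onI) simp
  ultimately show ?thesis by (simp add: card_image card_Wset)
qed

definition Dset :: "nat multiset \<Rightarrow> nat list set" where "Dset lam = {ds. mset ds = lam}"

lemma Dset_finite: "finite (Dset lam)"
proof -
  obtain xs where "mset xs = lam" using ex_mset by blast
  then show ?thesis using mset_eq_finite[of xs] by (simp add: Dset_def)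
qed

lemma Dset_ne: "Dset lam \<noteq> {}"
  using ex_mset[of lam] by (auto simp: Dset_def)

lemma STT_eq: "star_thorn_trees lam = Wset (sum_mset lam) (size lam) \<times> Dset lam"
  by (auto simp: star_thorn_trees_def Wset_def Dset_def)

lemma perm_Sigma:
  "{x \<in> permuted_stt lam. Q x} = (SIGMA \<tau>:star_thorn_trees lam. SS (fst \<tau>) (snd \<tau>) (\<lambda>\<sigma>. Q (\<tau>, \<sigma>)))"
  by (auto simp: permuted_stt_def SS_def)

lemma card_perm:
  "card {x \<in> permuted_stt lam. Q x} =
     (\<Sum>w\<in>Wset (sum_mset lam) (size lam). \<Sum>ds\<in>Dset lam. card (SS w ds (\<lambda>\<sigma>. Q ((w, ds), \<sigma>))))"
proof -
  have "card {x \<in> permuted_stt lam. Q x} = (\<Sum>\<tau>\<in>star_thorn_trees lam. card (SS (fst \<tau>) (snd \<tau>) (\<lambda>\<sigma>. Q (\<tau>, \<sigma>))))"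
    unfolding perm_Sigma
    by (rule card_SigmaI) (auto simp: STT_eq Wset_finite Dset_finite SS_finite)
  also have "\<dots> = (\<Sum>w\<in>Wset (sum_mset lam) (size lam). \<Sum>ds\<in>Dset lam. card (SS w ds (\<lambda>\<sigma>. Q ((w, ds), \<sigma>))))"
    unfolding STT_eq by (simp add: sum.cartesian_product case_prod_beta)
  finally show ?thesis .
qed

lemma perm_all: "{x \<in> permuted_stt lam. True} = permuted_stt lam" by simp



definition swp :: "nat \<Rightarrow> nat list \<Rightarrow> nat list" where
  "swp v ds = ds[0 := ds ! v, v := ds ! 0]"

lemma swp_props:
  assumes "v < length ds"
  shows "length (swp v ds) = length ds" "mset (swp v ds) = mset ds" "swp v (swp v ds) = ds"
    "swp v ds ! 0 = ds ! v"
proof -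
  show l: "length (swp v ds) = length ds" by (simp add: swp_def)
  have "0 < length ds" using assms by linarith
  show "mset (swp v ds) = mset ds" unfolding swp_def using mset_swap[OF assms \<open>0 < length ds\<close>] by simp
  show "swp v (swp v ds) = ds"
    using assms \<open>0 < length ds\<close> by (intro nth_equalityI) (auto simp: swp_def nth_list_update)
  show "swp v ds ! 0 = ds ! v"
  proof (cases "v = 0")
    case True then show ?thesis by (simp add: swp_def)
  next
    case False
    then have "swp v ds ! 0 = ds[0 := ds ! v] ! 0" by (simp add: swp_def)
    also have "\<dots> = ds ! v" using \<open>0 < length ds\<close> by (rule nth_list_update_eq)
    finally show ?thesis .
  qed
qed

lemma swp_D:
  assumes "ds \<in> Dset lam" "v < size lam"
  shows "swp v ds \<in> Dset lam \<and> swp v (swp v ds) = ds \<and> swp v ds ! 0 = ds ! v"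
proof -
  have l: "v < length ds" using assms by (auto simp: Dset_def)
  then show ?thesis using swp_props[OF l] assms by (auto simp: Dset_def)
qed

lemma sym_sum:
  assumes "v < size lam"
  shows "(\<Sum>ds\<in>Dset lam. ds ! v) = (\<Sum>ds\<in>Dset lam. ds ! 0)"
  by (rule sum.reindex_bij_witness[where i = "swp v" and j = "swp v"]) (use swp_D assms in blast)+

lemma len_le_sum: "\<forall>x\<in>set xs. 0 < (x::nat) \<Longrightarrow> length xs \<le> sum_list xs"
  by (induction xs) auto

lemma D_props:
  assumes "ds \<in> Dset lam" "\<forall>x \<in># lam. 0 < x"
  shows "length ds = size lam" "sum_list ds = sum_mset lam" "\<forall>x\<in>set ds. 0 < x"
  using assms by (auto simp: Dset_def simp flip: sum_mset_sum_list)

lemma S_total: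
  assumes pos: "\<forall>x \<in># lam. 0 < x"
  shows "size lam * ((\<Sum>ds\<in>Dset lam. ds ! 0) - card (Dset lam))
         = card (Dset lam) * (sum_mset lam - size lam)"
proof -
  let ?D = "Dset lam" and ?p = "size lam"
  have Sv: "(\<Sum>ds\<in>?D. ds ! v - 1) = (\<Sum>ds\<in>?D. ds ! 0) - card ?D" if v: "v < ?p" for v
  proof -
    have "(\<Sum>ds\<in>?D. ds ! v - 1) = (\<Sum>ds\<in>?D. ds ! v) - (\<Sum>ds\<in>?D. 1)"
    proof (rule sum_subtractf_nat)
      fix ds assume "ds \<in> ?D"
      then have "ds ! v \<in> set ds" "length ds = ?p" "\<forall>x\<in>set ds. 0 < x" using D_props[OF _ pos] v by auto
      then show "1 \<le> ds ! v" using v by (metis One_nat_def Suc_leI nth_mem)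
    qed
    then show ?thesis using sym_sum[OF v] by simp
  qed
  have "(\<Sum>v<?p. \<Sum>ds\<in>?D. ds ! v - 1) = (\<Sum>ds\<in>?D. \<Sum>v<?p. ds ! v - 1)" by (rule sum.swap)
  also have "\<dots> = (\<Sum>ds\<in>?D. sum_mset lam - ?p)"
  proof (rule sum.cong[OF refl])
    fix ds assume ds: "ds \<in> ?D"
    note dp = D_props[OF ds pos]
    have "(\<Sum>v<?p. ds ! v - 1) = card (black_thorns ds)" using dp by (simp add: BT_Sigma)
    then show "(\<Sum>v<?p. ds ! v - 1) = sum_mset lam - ?p" using card_BT[OF dp(3)] dp by simp
  qed
  finally have "(\<Sum>v<?p. \<Sum>ds\<in>?D. ds ! v - 1) = card ?D * (sum_mset lam - ?p)" by simp
  moreover have "(\<Sum>v<?p. \<Sum>ds\<in>?D. ds ! v - 1) = ?p * ((\<Sum>ds\<in>?D. ds ! 0) - card ?D)"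
    using Sv by simp
  ultimately show ?thesis by simp
qed

lemma hockey:
  assumes "1 \<le> p"
  shows "(\<Sum>v<p. (q + p - Suc v) choose (p - Suc v)) = (q + p) choose (p - 1)"
proof -
  have "(\<Sum>v<p. (q + p - Suc v) choose (p - Suc v)) = (\<Sum>v<p. (\<lambda>k. (q + k) choose k) (p - Suc v))"
    by (rule sum.cong[OF refl]) auto
  also have "\<dots> = (\<Sum>k<p. (q + k) choose k)" by (rule sum.nat_diff_reindex)
  also have "\<dots> = (\<Sum>k\<le>p - 1. (q + k) choose k)"
    using assms by (metis Suc_diff_1 lessThan_Suc_atMost less_le_trans zero_less_one)
  also have "\<dots> = Suc (q + (p - 1)) choose (p - 1)" by (rule sum_choose_lower)
  finally show ?thesis using assms by simp
qed

lemma sum_if_card: "finite A \<Longrightarrow> (\<Sum>x\<in>A. if P x then c else 0) = card {x\<in>A. P x} * (c::nat)"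
  by (simp add: sum.inter_filter[symmetric])



theorem proposition5p6:
  fixes lam :: "nat multiset" and N p :: nat
  assumes "\<forall>x \<in># lam. 0 < x"
    and "sum_mset lam = N"
    and "size lam = p"
    and "1 \<le> N"
  shows "real (card {x \<in> permuted_stt lam. P1 x \<and> P2 x})
           / real (card {x \<in> permuted_stt lam. P1 x})
         = real N / (real p * (real N - real p + 1)) \<and>
         real (card {x \<in> permuted_stt lam. P1 x \<and> P2 x})
           / real (card (permuted_stt lam))
         = 1 / (real N - real p + 1)"
proof -
  note pos = assms(1)
  define q where "q = N - p"
  define D where "D = card (Dset lam)"
  define W where "W = Wset N p"
  define P12c where "P12c = card {x \<in> permuted_stt lam. P1 x \<and> P2 x}"
  define P1c where "P1c = card {x \<in> permuted_stt lam. P1 x}"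
  define Tot where "Tot = card (permuted_stt lam)"
  obtain xs where xs: "mset xs = lam" using ex_mset by blast
  have xsD: "xs \<in> Dset lam" using xs by (simp add: Dset_def)
  have pN: "p \<le> N" using D_props[OF xsD pos] len_le_sum assms by metis
  have p1: "1 \<le> p"
  proof (rule ccontr)
    assume "\<not> 1 \<le> p"
    then have "size lam = 0" using assms(3) by simp
    then have "lam = {#}" by simp
    then show False using assms(2,4) by simp
  qed
  have Nq: "N = q + p" using pN by (simp add: q_def)
  have D0: "0 < D" using Dset_finite Dset_ne by (simp add: D_def card_gt_0_iff)
  have finW: "finite W" by (simp add: W_def Wset_finite)
  have tree: "length w = N \<and> length (filter id w) = length ds \<and> length ds = p \<and> 0 < length ds \<and>
      (\<forall>x\<in>set ds. 0 < x) \<and> card (white_thorns w) = q \<and> card (black_thorns ds) = q"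
    if "w \<in> W" "ds \<in> Dset lam" for w ds
  proof -
    note dp = D_props[OF that(2) pos]
    have "card (white_thorns w) = q" using that(1) card_WT dp assms by (simp add: W_def Wset_def q_def)
    moreover have "card (black_thorns ds) = q" using card_BT[OF dp(3)] dp assms by (simp add: q_def)
    ultimately show ?thesis using that(1) dp assms p1 by (auto simp: W_def Wset_def)
  qed
  have P1iff: "P1 ((w, ds), \<sigma>) \<longleftrightarrow> w ! 0" if "length w = N" for w ds \<sigma>
    using that assms(4) by (cases w) (auto simp: P1_def)
  have Tot_eq: "Tot = card W * D * fact q"
  proof -
    have "Tot = card {x \<in> permuted_stt lam. True}" by (simp add: Tot_def)
    also have "\<dots> = (\<Sum>w\<in>W. \<Sum>ds\<in>Dset lam. fact q)"
      unfolding card_perm W_def[symmetric] assms(2,3)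
      apply (rule sum.cong[OF refl], rule sum.cong[OF refl])
      using tree card_SS_all by simp
    finally show ?thesis by (simp add: D_def)
  qed
  have W0: "card {w\<in>W. w ! 0} = (N - 1) choose (p - 1)"
    using card_prefix[of 0 p N] p1 pN by (simp add: W_def)
  have P1_eq: "P1c = ((N - 1) choose (p - 1)) * D * fact q"
  proof -
    have "P1c = (\<Sum>w\<in>W. \<Sum>ds\<in>Dset lam. if w ! 0 then fact q else 0)"
      unfolding P1c_def card_perm W_def[symmetric] assms(2,3)
    proof (rule sum.cong[OF refl], rule sum.cong[OF refl])
      fix w ds assume a: "w \<in> W" "ds \<in> Dset lam"
      note t = tree[OF a]
      have "SS w ds (\<lambda>\<sigma>. P1 ((w, ds), \<sigma>)) = (if w ! 0 then SS w ds (\<lambda>_. True) else {})"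
        using P1iff t by (auto simp: SS_def)
      then show "card (SS w ds (\<lambda>\<sigma>. P1 ((w, ds), \<sigma>))) = (if w ! 0 then fact q else 0)"
        using card_SS_all t by simp
    qed
    also have "\<dots> = (\<Sum>w\<in>W. if w ! 0 then D * fact q else 0)" by (rule sum.cong[OF refl]) (simp add: D_def)
    also have "\<dots> = card {w\<in>W. w ! 0} * (D * fact q)" by (rule sum_if_card[OF finW])
    finally show ?thesis using W0 by simp
  qed
  have P1pos: "0 < P1c" using P1_eq D0 p1 pN by simp
  have Totpos: "0 < Tot" using Tot_eq D0 pN finW by (simp add: W_def card_Wset)
  have b1: "p * (N choose p) = N * ((N - 1) choose (p - 1))" using p1 by (simp add: times_binomial_minus1_eq)
  have b2: "(q + 1) * (N choose (p - 1)) = N * ((N - 1) choose (p - 1))"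
  proof -
    have "N - (p - 1) = q + 1" using Nq p1 by simp
    then show ?thesis using binomial_absorb_comp[of N "p - 1"] by simp
  qed
  have cW: "card W = N choose p" by (simp add: W_def card_Wset)
  have I: "p * P12c * (q + 1) = N * P1c \<and> P12c * (q + 1) = Tot"
  proof (cases "q = 0")
    case True
    then have Np: "N = p" using Nq by simp
    have "P12c = P1c"
      unfolding P12c_def P1c_def card_perm
    proof (rule sum.cong[OF refl], rule sum.cong[OF refl])
      fix w ds assume a: "w \<in> Wset (sum_mset lam) (size lam)" "ds \<in> Dset lam"
      then have a': "w \<in> W" using assms by (simp add: W_def)
      note t = tree[OF a' a(2)]
      have eq: "SS w ds (\<lambda>\<sigma>. P2 ((w, ds), \<sigma>)) = SS w ds (\<lambda>_. True)"
        by (rule SS_P2_q0) (use t True p1 in simp_all)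
      have all: "P2 ((w, ds), \<sigma>)" if "\<sigma> \<in> extensional (white_thorns w)" "bij_betw \<sigma> (white_thorns w) (black_thorns ds)" for \<sigma>
      proof -
        have "\<sigma> \<in> SS w ds (\<lambda>_. True)" using that by (simp add: SS_def)
        then have "\<sigma> \<in> SS w ds (\<lambda>\<sigma>. P2 ((w, ds), \<sigma>))" using eq by simp
        then show ?thesis by (simp add: SS_def)
      qed
      have "SS w ds (\<lambda>\<sigma>. P1 ((w, ds), \<sigma>) \<and> P2 ((w, ds), \<sigma>)) = SS w ds (\<lambda>\<sigma>. P1 ((w, ds), \<sigma>))"
        unfolding SS_def using all by blast
      then show "card (SS w ds (\<lambda>\<sigma>. P1 ((w, ds), \<sigma>) \<and> P2 ((w, ds), \<sigma>))) = card (SS w ds (\<lambda>\<sigma>. P1 ((w, ds), \<sigma>)))"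
        by simp
    qed
    moreover have "P1c = Tot" using P1_eq Tot_eq cW Np by simp
    ultimately show ?thesis using Np True by simp
  next
    case False
    then have q1: "1 \<le> q" by simp
    define S0 where "S0 = (\<Sum>ds\<in>Dset lam. ds ! 0) - D"
    have pS: "p * S0 = D * q" using S_total[OF pos] assms by (simp add: S0_def D_def q_def)
    have Sv: "(\<Sum>ds\<in>Dset lam. ds ! v - 1) = S0" if v: "v < p" for v
    proof -
      have "(\<Sum>ds\<in>Dset lam. ds ! v - 1) = (\<Sum>ds\<in>Dset lam. ds ! v) - (\<Sum>ds\<in>Dset lam. 1)"
      proof (rule sum_subtractf_nat)
        fix ds assume "ds \<in> Dset lam"
        then have "ds ! v \<in> set ds" "\<forall>x\<in>set ds. 0 < x" using D_props[OF _ pos] v assms by auto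
        then show "1 \<le> ds ! v" by (metis One_nat_def Suc_leI)
      qed
      then show ?thesis using sym_sum[of v lam] v assms by (simp add: S0_def D_def)
    qed
    have P12_1: "P12c = (\<Sum>w\<in>W. \<Sum>ds\<in>Dset lam. aval w ds * fact (q - 1))"
      unfolding P12c_def card_perm W_def[symmetric] assms(2,3)
    proof (rule sum.cong[OF refl], rule sum.cong[OF refl])
      fix w ds assume a: "w \<in> W" "ds \<in> Dset lam"
      note t = tree[OF a]
      show "card (SS w ds (\<lambda>\<sigma>. P1 ((w, ds), \<sigma>) \<and> P2 ((w, ds), \<sigma>))) = aval w ds * fact (q - 1)"
      proof (cases "w ! 0")
        case True
        then have "SS w ds (\<lambda>\<sigma>. P1 ((w, ds), \<sigma>) \<and> P2 ((w, ds), \<sigma>)) = SS w ds (\<lambda>\<sigma>. P2 ((w, ds), \<sigma>))"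
          using P1iff t by (auto simp: SS_def)
        then show ?thesis using card_SS_P2[of w ds] t True q1 by simp
      next
        case False
        then have "SS w ds (\<lambda>\<sigma>. P1 ((w, ds), \<sigma>) \<and> P2 ((w, ds), \<sigma>)) = {}"
          using P1iff t by (auto simp: SS_def)
        moreover have "aval w ds = 0" using False by (auto simp: aval_def intro!: sum.neutral)
        ultimately show ?thesis by simp
      qed
    qed
    have sumA: "(\<Sum>w\<in>W. \<Sum>ds\<in>Dset lam. aval w ds) = S0 * (N choose (p - 1))"
    proof -
      have "(\<Sum>w\<in>W. \<Sum>ds\<in>Dset lam. aval w ds)
          = (\<Sum>w\<in>W. \<Sum>ds\<in>Dset lam. \<Sum>v<p. if (\<forall>i\<le>v. w ! i) then ds ! v - 1 else 0)"
        apply (rule sum.cong[OF refl], rule sum.cong[OF refl])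
        using D_props[OF _ pos] assms by (simp add: aval_def)
      also have "\<dots> = (\<Sum>v<p. \<Sum>w\<in>W. \<Sum>ds\<in>Dset lam. if (\<forall>i\<le>v. w ! i) then ds ! v - 1 else 0)"
        by (simp add: sum.swap[of _ "{..<p}"] sum.swap[of _ _ "Dset lam"])
      also have "\<dots> = (\<Sum>v<p. \<Sum>w\<in>W. if (\<forall>i\<le>v. w ! i) then S0 else 0)"
      proof (rule sum.cong[OF refl], rule sum.cong[OF refl])
        fix v w assume "v \<in> {..<p}"
        then show "(\<Sum>ds\<in>Dset lam. if (\<forall>i\<le>v. w ! i) then ds ! v - 1 else 0) = (if (\<forall>i\<le>v. w ! i) then S0 else 0)"
        proof (cases "\<forall>i\<le>v. w ! i")
          case True then show ?thesis using Sv \<open>v \<in> {..<p}\<close> by simp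
        next
          case False then show ?thesis by (simp only: if_not_P[OF False] if_False sum.neutral_const)
        qed
      qed
      also have "\<dots> = (\<Sum>v<p. card {w\<in>W. \<forall>i\<le>v. w ! i} * S0)"
        by (rule sum.cong[OF refl]) (rule sum_if_card[OF finW])
      also have "\<dots> = (\<Sum>v<p. ((q + p - Suc v) choose (p - Suc v)) * S0)"
        by (rule sum.cong[OF refl]) (use card_prefix pN Nq in \<open>simp add: W_def\<close>)
      also have "\<dots> = (\<Sum>v<p. ((q + p - Suc v) choose (p - Suc v))) * S0"
        by (rule sum_distrib_right[symmetric])
      also have "\<dots> = S0 * (N choose (p - 1))"
        using hockey[OF p1, of q] Nq by simp
      finally show ?thesis .
    qed
    have "P12c = (\<Sum>w\<in>W. \<Sum>ds\<in>Dset lam. aval w ds) * fact (q - 1)"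
      unfolding P12_1 by (simp add: sum_distrib_right)
    then have "P12c = fact (q - 1) * S0 * (N choose (p - 1))"
      using sumA by simp
    then have pP: "p * P12c = fact q * D * (N choose (p - 1))"
    proof -
      assume "P12c = fact (q - 1) * S0 * (N choose (p - 1))"
      then have "p * P12c = fact (q - 1) * (p * S0) * (N choose (p - 1))" by simp
      also have "\<dots> = (q * fact (q - 1)) * D * (N choose (p - 1))" using pS by simp
      also have "q * fact (q - 1) = fact q"
      proof -
        obtain m where "q = Suc m" using q1 by (cases q) auto
        then show ?thesis by simp
      qed
      finally show ?thesis .
    qed
    have I1: "p * P12c * (q + 1) = N * P1c"
    proof -
      have "p * P12c * (q + 1) = fact q * D * (N choose (p - 1)) * (q + 1)" by (simp only: pP)
      also have "\<dots> = fact q * D * ((q + 1) * (N choose (p - 1)))" by (simp only: ac_simps)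
      also have "\<dots> = fact q * D * (N * ((N - 1) choose (p - 1)))" by (simp only: b2)
      also have "\<dots> = N * P1c" unfolding P1_eq by (simp only: ac_simps)
      finally show ?thesis .
    qed
    moreover have "P12c * (q + 1) = Tot"
    proof -
      have "p * (P12c * (q + 1)) = N * P1c" using I1 by (simp only: ac_simps)
      also have "\<dots> = (N * ((N - 1) choose (p - 1))) * D * fact q" unfolding P1_eq by (simp only: ac_simps)
      also have "\<dots> = (p * (N choose p)) * D * fact q" by (simp only: b1)
      also have "\<dots> = p * Tot" unfolding Tot_eq cW by (simp only: ac_simps)
      finally show ?thesis using p1 by simp
    qed
    ultimately show ?thesis by simp
  qed
  have rq: "real N - real p + 1 = real (q + 1)" using pN by (simp add: q_def of_nat_diff)
  have I1r: "real P12c * (real p * real (q + 1)) = real N * real P1c"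
  proof -
    have "real (p * P12c * (q + 1)) = real (N * P1c)" using I by simp
    then show ?thesis by (simp only: of_nat_mult ac_simps)
  qed
  have I2r: "real P12c * real (q + 1) = 1 * real Tot"
  proof -
    have "real (P12c * (q + 1)) = real Tot" using I by simp
    then show ?thesis by (simp only: of_nat_mult mult_1)
  qed
  have d1: "real P1c \<noteq> 0" "real p * real (q + 1) \<noteq> 0" "real Tot \<noteq> 0" "real (q + 1) \<noteq> 0"
    using P1pos p1 Totpos by auto
  show ?thesis
    unfolding P12c_def[symmetric] P1c_def[symmetric] Tot_def[symmetric] rq
    using I1r I2r frac_eq_eq[OF d1(1) d1(2)] frac_eq_eq[OF d1(3) d1(4)] by simp
qed

end
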